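(* Let $c:\mathbb{R}^n\times\mathbb{R}^n\to[0,\infty)$ be continuously differentiable and satisfy the twist condition: for every $x_0\in\mathbb{R}^n$ the map $y\mapsto\nabla_x c(x_0,y)$ is injective. Then $c$ satisfies the Local Metric Twist Condition [LMTC] in the metric measure space $(\mathbb{R}^n,\mathsf{d}_{\mathrm{Euc}},\mathscr{L}^n)$.
   Context: For $x,y,z\in\mathsf{X}$, $s,r>0$, set $F_{s|r}(x|y,z):=\{x'\in B_s(x): c(x',y')+c(x,z')<c(x,y')+c(x',z')\ \ \forall y'\in B_r(y),\,z'\in B_r(z)\}$. In a metric measure space $(\mathsf{X},\mathsf{d},\mathfrak{m})$, $c$ satisfies [LMTC] if for every $x,y,z\in\mathsf{X}$ with $y\ne z$ there exist $r_1,r_2>0$ such that for every $\bar x\in B_{r_1}(x)$, $\liminf_{s\to0}\frac{\mathfrak{m}(F_{s|r_2}(\bar x|y,z))}{\mathfrak{m}(B_s(\bar x))}>0$. Here $\mathfrak{m}=\mathscr{L}^n$ is Lebesgue measure and balls are Euclidean. *)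

theory Defs
  imports "HOL-Analysis.Analysis"
begin

definition F_set :: "('a::metric_space \<Rightarrow> 'a \<Rightarrow> real) \<Rightarrow> real \<Rightarrow> real \<Rightarrow> 'a \<Rightarrow> 'a \<Rightarrow> 'a \<Rightarrow> 'a set" where
  "F_set c s r x y z = {x' \<in> ball x s. \<forall>y'\<in>ball y r. \<forall>z'\<in>ball z r.
      c x' y' + c x z' < c x y' + c x' z'}"

definition LMTC :: "('a::metric_space \<Rightarrow> 'a \<Rightarrow> real) \<Rightarrow> 'a measure \<Rightarrow> bool" where
  "LMTC c m \<longleftrightarrow> (\<forall>x y z. y \<noteq> z \<longrightarrow>
     (\<exists>r1>0. \<exists>r2>0. \<forall>xb\<in>ball x r1.
        Liminf (at_right (0::real))
          (\<lambda>s. ereal (measure m (F_set c s r2 xb y z) / measure m (ball xb s))) > 0))"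

definition grad_x :: "('a::euclidean_space \<Rightarrow> 'a \<Rightarrow> real) \<Rightarrow> 'a \<Rightarrow> 'a \<Rightarrow> 'a" where
  "grad_x c x y = (SOME g. ((\<lambda>x'. c x' y) has_derivative (\<lambda>h. g \<bullet> h)) (at x))"

end

theory Submission
  imports Defs
begin

lemma lin_repr:
  fixes f :: "'a::euclidean_space \<Rightarrow> real"
  assumes "linear f"
  shows "f h = (\<Sum>b\<in>Basis. f b *\<^sub>R b) \<bullet> h"
proof -
  have "f h = f (\<Sum>b\<in>Basis. (h \<bullet> b) *\<^sub>R b)" by (simp add: euclidean_representation)
  also have "\<dots> = (\<Sum>b\<in>Basis. (h \<bullet> b) * f b)"
    using assms by (simp add: linear_sum linear_scale)
  also have "\<dots> = (\<Sum>b\<in>Basis. f b *\<^sub>R b) \<bullet> h"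
    by (simp add: inner_sum_right inner_commute mult.commute)
  finally show ?thesis .
qed

lemma grad_eq:
  fixes c :: "'a::euclidean_space \<Rightarrow> 'a \<Rightarrow> real"
  assumes d: "((\<lambda>x'. c x' y) has_derivative L) (at x)"
  shows "grad_x c x y \<bullet> h = L h"
proof -
  have lin: "linear L" using d has_derivative_linear by blast
  define g where "g = (\<Sum>b\<in>Basis. L b *\<^sub>R b)"
  have "L = (\<lambda>h. g \<bullet> h)" unfolding g_def by (rule ext, rule lin_repr[OF lin])
  with d have ex: "((\<lambda>x'. c x' y) has_derivative (\<lambda>h. g \<bullet> h)) (at x)" by simp
  then have "((\<lambda>x'. c x' y) has_derivative (\<lambda>h. grad_x c x y \<bullet> h)) (at x)"
    unfolding grad_x_def by (rule someI)
  hence "(\<lambda>h. grad_x c x y \<bullet> h) = L" by (rule has_derivative_unique[OF _ d])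
  thus ?thesis by metis
qed

lemma partial_deriv:
  fixes c :: "'a::euclidean_space \<Rightarrow> 'a \<Rightarrow> real"
  assumes "((\<lambda>q. c (fst q) (snd q)) has_derivative blinfun_apply D) (at (x,y))"
  shows "((\<lambda>x'. c x' y) has_derivative (\<lambda>h. blinfun_apply D (h,0))) (at x)"
proof -
  have "((\<lambda>x'. (x',y)) has_derivative (\<lambda>h. (h,0))) (at x)"
    by (intro has_derivative_Pair has_derivative_ident has_derivative_const)
  from has_derivative_compose[OF this assms] show ?thesis by simp
qed

lemma D_close:
  fixes D D0 :: "('a::euclidean_space \<times> 'a) \<Rightarrow>\<^sub>L real"
  assumes "dist D D0 \<le> e"
  shows "\<bar>blinfun_apply D (h,0) - blinfun_apply D0 (h,0)\<bar> \<le> e * norm h"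
proof -
  have "\<bar>blinfun_apply D (h,0) - blinfun_apply D0 (h,0)\<bar> = norm (blinfun_apply (D - D0) (h,0))"
    by (simp add: blinfun.diff_left)
  also have "\<dots> \<le> norm (D - D0) * norm (h, 0::'a)" by (rule norm_blinfun)
  also have "\<dots> \<le> e * norm h"
    using assms by (simp add: dist_norm norm_Pair mult_right_mono)
  finally show ?thesis .
qed

lemma dist_pair_le:
  fixes a b :: "'a::real_normed_vector"
  shows "dist (a,b) (c,d) \<le> dist a c + dist b d"
  using norm_Pair_le[of "a-c" "b-d"] by (simp add: dist_norm)

lemma F_borel:
  fixes c :: "'a::euclidean_space \<Rightarrow> 'a \<Rightarrow> real"
  assumes cont: "continuous_on UNIV (\<lambda>q. c (fst q) (snd q))"
  shows "F_set c s r xb y z \<in> sets borel"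
proof -
  define cc where "cc = (\<lambda>q. c (fst q) (snd q))"
  define P where "P = (\<lambda>x' y' z'. c x' y' + c xb z' < c xb y' + c x' z')"
  define K where "K = (\<lambda>k::nat. cball y (r - 1/Suc k) \<times> cball z (r - 1/Suc k))"
  define C where "C = (\<lambda>k. {x'. \<exists>p\<in>K k. \<not> P x' (fst p) (snd p)})"
  have eq: "F_set c s r xb y z = ball xb s \<inter> (\<Inter>k. - C k)"
  proof (intro equalityI subsetI)
    fix x' assume "x' \<in> F_set c s r xb y z"
    then have a: "x' \<in> ball xb s" and b: "\<forall>y'\<in>ball y r. \<forall>z'\<in>ball z r. P x' y' z'"
      unfolding F_set_def P_def by auto
    have "x' \<notin> C k" for k
    proof
      assume "x' \<in> C k"
      then obtain p where p: "p \<in> K k" "\<not> P x' (fst p) (snd p)" unfolding C_def by auto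
      have pos: "1/real (Suc k) > (0::real)" by simp
      obtain a b where ab: "p = (a,b)" by force
      with p(1) have d: "dist y a \<le> r - 1/real (Suc k)" "dist z b \<le> r - 1/real (Suc k)"
        unfolding K_def by auto
      have "dist y a < r" "dist z b < r" using d pos by linarith+
      with ab have "fst p \<in> ball y r" "snd p \<in> ball z r" by (auto simp: mem_ball)
      with b p(2) show False by auto
    qed
    with a show "x' \<in> ball xb s \<inter> (\<Inter>k. - C k)" by auto
  next
    fix x' assume x': "x' \<in> ball xb s \<inter> (\<Inter>k. - C k)"
    have "P x' y' z'" if y': "y' \<in> ball y r" and z': "z' \<in> ball z r" for y' z'
    proof -
      have "0 < r - max (dist y y') (dist z z')" using y' z' by (auto simp: mem_ball)
      then obtain k where k: "inverse (real (Suc k)) < r - max (dist y y') (dist z z')"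
        using reals_Archimedean by blast
      have m: "dist y y' \<le> max (dist y y') (dist z z')" "dist z z' \<le> max (dist y y') (dist z z')" by auto
      have "dist y y' \<le> r - inverse (real (Suc k))" "dist z z' \<le> r - inverse (real (Suc k))"
        using k m by linarith+
      then have "(y',z') \<in> K k" unfolding K_def by (simp add: mem_cball inverse_eq_divide)
      moreover have "x' \<notin> C k" using x' by auto
      ultimately show ?thesis unfolding C_def by force
    qed
    with x' show "x' \<in> F_set c s r xb y z" unfolding F_set_def P_def by auto
  qed
  define Q where "Q = (\<lambda>q::'a \<times> 'a \<times> 'a. cc (xb, fst (snd q)) + cc (fst q, snd (snd q))
        - cc (fst q, fst (snd q)) - cc (xb, snd (snd q)))"
  have ccc: "continuous_on UNIV cc" using cont unfolding cc_def .
  have Qc: "continuous_on UNIV Q" unfolding Q_def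
    by (intro continuous_intros continuous_on_compose2[OF ccc]) auto
  have oW: "open {q. 0 < Q q}"
    by (rule open_Collect_less) (auto intro: Qc continuous_on_const)
  have PQ: "P a b d \<longleftrightarrow> 0 < Q (a, b, d)" for a b d
    unfolding P_def Q_def cc_def by auto
  have "open (- C k)" for k
  proof (subst open_subopen, intro ballI)
    fix x0 assume "x0 \<in> - C k"
    then have "{x0} \<times> K k \<subseteq> {q. 0 < Q q}" unfolding C_def using PQ by auto
    moreover have "compact (K k)" unfolding K_def by (intro compact_Times compact_cball)
    ultimately obtain X0 where X0: "x0 \<in> X0" "open X0" "X0 \<times> K k \<subseteq> {q. 0 < Q q}"
      using Elementary_Topology.tube_lemma[OF _ oW] by metis
    have "X0 \<subseteq> - C k" using X0(3) PQ unfolding C_def by fastforce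
    with X0 show "\<exists>T. open T \<and> x0 \<in> T \<and> T \<subseteq> - C k" by blast
  qed
  then have "(\<Inter>k. - C k) \<in> sets borel" by (intro sets.countable_INT' borel_open) auto
  then show ?thesis unfolding eq by (intro sets.Int) auto
qed

theorem mainTheorem3:
  fixes c :: "'a::euclidean_space \<Rightarrow> 'a \<Rightarrow> real"
  assumes nonneg: "\<And>x y. c x y \<ge> 0"
    and C1: "\<exists>D :: 'a \<times> 'a \<Rightarrow> ('a \<times> 'a) \<Rightarrow>\<^sub>L real.
               (\<forall>p. ((\<lambda>q. c (fst q) (snd q)) has_derivative blinfun_apply (D p)) (at p))
               \<and> continuous_on UNIV D"
    and twist: "\<And>x0. inj (\<lambda>y. grad_x c x0 y)"
  shows "LMTC c lebesgue"
proof -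
  obtain D :: "'a \<times> 'a \<Rightarrow> ('a \<times> 'a) \<Rightarrow>\<^sub>L real" where
    Dd: "\<And>p. ((\<lambda>q. c (fst q) (snd q)) has_derivative blinfun_apply (D p)) (at p)"
    and Dc: "continuous_on UNIV D" using C1 by blast
  have pd: "((\<lambda>x'. c x' y) has_derivative (\<lambda>h. blinfun_apply (D (x,y)) (h,0))) (at x)" for x y
    using partial_deriv[OF Dd] .
  have gr: "grad_x c x y \<bullet> h = blinfun_apply (D (x,y)) (h,0)" for x y h
    using grad_eq[OF pd] .
  have ccont: "continuous_on UNIV (\<lambda>q. c (fst q) (snd q))"
    by (intro continuous_at_imp_continuous_on ballI has_derivative_continuous[OF Dd])
  show ?thesis unfolding LMTC_def
  proof (intro allI impI)
    fix x y z :: 'a assume yz: "y \<noteq> z"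
    define v where "v = grad_x c x z - grad_x c x y"
    have v0: "v \<noteq> 0" using twist[of x] yz unfolding inj_def v_def by auto
    have nv: "norm v > 0" using v0 by simp
    have vh: "v \<bullet> h = blinfun_apply (D (x,z)) (h,0) - blinfun_apply (D (x,y)) (h,0)" for h
      by (simp add: v_def inner_diff_left gr)
    define e where "e = norm v / 8"
    have e0: "e > 0" using nv by (simp add: e_def)
    obtain d1 where d1: "d1 > 0" "\<And>p. dist p (x,z) < d1 \<Longrightarrow> dist (D p) (D (x,z)) < e"
      using Dc e0 unfolding continuous_on_iff by (metis UNIV_I)
    obtain d2 where d2: "d2 > 0" "\<And>p. dist p (x,y) < d2 \<Longrightarrow> dist (D p) (D (x,y)) < e"
      using Dc e0 unfolding continuous_on_iff by (metis UNIV_I)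
    define \<delta> where "\<delta> = min d1 d2"
    have \<delta>0: "\<delta> > 0" using d1 d2 by (simp add: \<delta>_def)
    have closez: "\<bar>blinfun_apply (D (p,w)) (h,0) - blinfun_apply (D (x,z)) (h,0)\<bar> \<le> e * norm h"
      if "dist p x < \<delta>/2" "dist w z < \<delta>/2" for p w h
    proof -
      have "dist (p,w) (x,z) < d1" using dist_pair_le[of p w x z] that
        unfolding \<delta>_def by linarith
      then show ?thesis using d1(2) by (intro D_close) (simp add: less_imp_le)
    qed
    have closey: "\<bar>blinfun_apply (D (p,w)) (h,0) - blinfun_apply (D (x,y)) (h,0)\<bar> \<le> e * norm h"
      if "dist p x < \<delta>/2" "dist w y < \<delta>/2" for p w h
    proof -
      have "dist (p,w) (x,y) < d2" using dist_pair_le[of p w x y] that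
        unfolding \<delta>_def by linarith
      then show ?thesis using d2(2) by (intro D_close) (simp add: less_imp_le)
    qed
    show "\<exists>r1>0. \<exists>r2>0. \<forall>xb\<in>ball x r1.
        Liminf (at_right (0::real))
          (\<lambda>s. ereal (measure lebesgue (F_set c s r2 xb y z) / measure lebesgue (ball xb s))) > 0"
    proof (intro exI[of _ "\<delta>/4"] conjI ballI)
      show "\<delta>/4 > 0" using \<delta>0 by simp
      show "\<delta>/4 > 0" using \<delta>0 by simp
      fix xb assume xb: "xb \<in> ball x (\<delta>/4)"
      define \<kappa> :: real where "\<kappa> = (1/8) ^ DIM('a)"
      have \<kappa>0: "\<kappa> > 0" by (simp add: \<kappa>_def)
      have sub: "ball (xb + (s / (2 * norm v)) *\<^sub>R v) (s/8) \<subseteq> F_set c s (\<delta>/4) xb y z"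
        if s: "0 < s" "s < \<delta>/4" for s
      proof
        fix x' assume x': "x' \<in> ball (xb + (s / (2 * norm v)) *\<^sub>R v) (s/8)"
        define h where "h = x' - xb"
        define a where "a = s / (2 * norm v)"
        define k where "k = h - a *\<^sub>R v"
        have nk: "norm k < s/8" using x' unfolding k_def h_def a_def
          by (simp add: dist_norm norm_minus_commute algebra_simps)
        have nav: "norm (a *\<^sub>R v) = s/2" using nv s unfolding a_def by simp
        have hak: "h = a *\<^sub>R v + k" unfolding k_def by simp
        have nh: "norm h \<le> 5 * s / 8"
          unfolding hak using norm_triangle_ineq[of "a *\<^sub>R v" k] nav nk by linarith
        have vk: "\<bar>v \<bullet> k\<bar> \<le> norm v * norm k" by (rule Cauchy_Schwarz_ineq2)
        have "v \<bullet> (a *\<^sub>R v) = s/2 * norm v" using nv unfolding a_def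
          by (simp add: power2_norm_eq_inner[symmetric] power2_eq_square)
        moreover have "norm v * norm k \<le> norm v * (s/8)" using nk nv by simp
        moreover have "3 * s * norm v / 8 = s/2 * norm v - norm v * (s/8)" by (simp add: field_simps)
        ultimately have vhb: "v \<bullet> h \<ge> 3 * s * norm v / 8"
          using vk unfolding hak inner_add_right by linarith
        have x'in: "x' \<in> ball xb s" using nh s unfolding h_def by (simp add: dist_norm norm_minus_commute)
        have "c x' y' + c xb z' < c xb y' + c x' z'"
          if y': "y' \<in> ball y (\<delta>/4)" and z': "z' \<in> ball z (\<delta>/4)" for y' z'
        proof -
          define \<phi> where "\<phi> = (\<lambda>t::real. c (xb + t *\<^sub>R h) z' - c (xb + t *\<^sub>R h) y')"
          define \<phi>' where "\<phi>' = (\<lambda>t d. blinfun_apply (D (xb + t *\<^sub>R h, z')) (d *\<^sub>R h, 0)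
                                   - blinfun_apply (D (xb + t *\<^sub>R h, y')) (d *\<^sub>R h, 0))"
          have der: "(\<phi> has_derivative \<phi>' t) (at t)" for t
          proof -
            have l: "((\<lambda>t. xb + t *\<^sub>R h) has_derivative (\<lambda>d. d *\<^sub>R h)) (at t)"
              by (auto intro!: derivative_eq_intros)
            show ?thesis unfolding \<phi>_def \<phi>'_def
              by (intro has_derivative_diff has_derivative_compose[OF l pd])
          qed
          have "continuous_on {0..1} \<phi>"
            by (intro continuous_at_imp_continuous_on ballI has_derivative_continuous[OF der])
          then obtain \<xi> where \<xi>: "0 < \<xi>" "\<xi> < 1" "\<phi> 1 - \<phi> 0 = \<phi>' \<xi> (1 - 0)"
            using mvt[of 0 1 \<phi> \<phi>'] der by auto
          define p where "p = xb + \<xi> *\<^sub>R h"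
          have "norm (\<xi> *\<^sub>R h) \<le> norm h" using \<xi> mult_left_le_one_le[of "norm h" \<xi>] by simp
          then have "dist p xb < s" using nh s unfolding p_def by (simp add: dist_norm)
          then have dp: "dist p x < \<delta>/2" using xb s dist_triangle[of p x xb]
            by (simp add: dist_commute)
          have ez: "\<bar>blinfun_apply (D (p,z')) (h,0) - blinfun_apply (D (x,z)) (h,0)\<bar> \<le> e * norm h"
            using closez[OF dp] z' \<delta>0 by (simp add: dist_commute)
          have ey: "\<bar>blinfun_apply (D (p,y')) (h,0) - blinfun_apply (D (x,y)) (h,0)\<bar> \<le> e * norm h"
            using closey[OF dp] y' \<delta>0 by (simp add: dist_commute)
          have eh: "e * norm h \<le> e * (5 * s / 8)" using nh e0 by (simp add: mult_left_mono)
          have "\<phi> 1 - \<phi> 0 = blinfun_apply (D (p,z')) (h,0) - blinfun_apply (D (p,y')) (h,0)"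
            using \<xi>(3) unfolding \<phi>'_def p_def by simp
          also have "\<dots> \<ge> v \<bullet> h - 2 * (e * norm h)" using ez ey vh[of h] by linarith
          finally have "\<phi> 1 - \<phi> 0 \<ge> v \<bullet> h - 2 * (e * norm h)" .
          moreover have "v \<bullet> h - 2 * (e * norm h) > 0"
          proof -
            have "2 * (e * norm h) \<le> 5 * s * norm v / 32" using eh unfolding e_def by (simp add: mult.commute mult.left_commute)
            moreover have "5 * s * norm v / 32 < 3 * s * norm v / 8" using nv s by simp
            ultimately show ?thesis using vhb by linarith
          qed
          ultimately have "\<phi> 1 - \<phi> 0 > 0" by linarith
          moreover have "xb + h = x'" unfolding h_def by simp
          ultimately show ?thesis unfolding \<phi>_def by simp
        qed
        with x'in show "x' \<in> F_set c s (\<delta>/4) xb y z" unfolding F_set_def by auto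
      qed
      have U0: "measure lborel (ball (0::'a) 1) > 0" by (rule content_ball_pos) simp
      have mball: "measure lebesgue (ball w r) = r ^ DIM('a) * measure lborel (ball (0::'a) 1)"
        if "r \<ge> 0" for w :: 'a and r
        using content_ball_conv_unit_ball[OF that, of w] by simp
      have "eventually (\<lambda>s. s \<in> {0<..<\<delta>/4}) (at_right (0::real))"
        using \<delta>0 by (intro eventually_at_right_real) simp
      then have ev: "eventually (\<lambda>s. ereal \<kappa> \<le> ereal (measure lebesgue (F_set c s (\<delta>/4) xb y z)
                        / measure lebesgue (ball xb s))) (at_right (0::real))"
      proof (rule eventually_mono)
        fix s assume s: "s \<in> {0<..<\<delta>/4}"
        let ?F = "F_set c s (\<delta>/4) xb y z"
        let ?B = "ball (xb + (s / (2 * norm v)) *\<^sub>R v) (s/8)"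
        have Fb: "?F \<in> sets lebesgue"
          using F_borel[OF ccont, of s "\<delta>/4" xb y z] by simp
        have Fsub: "?F \<subseteq> ball xb s" unfolding F_set_def by auto
        have Ff: "?F \<in> fmeasurable lebesgue"
          by (rule fmeasurableI2[OF lmeasurable_ball Fsub Fb])
        have "measure lebesgue ?B \<le> measure lebesgue ?F"
          using sub[of s] s by (intro measure_mono_fmeasurable Ff) auto
        then have le: "(s/8) ^ DIM('a) * measure lborel (ball (0::'a) 1) \<le> measure lebesgue ?F"
          using mball[of "s/8"] s by simp
        have mb: "measure lebesgue (ball xb s) = s ^ DIM('a) * measure lborel (ball (0::'a) 1)"
          using mball[of s] s by simp
        have "\<kappa> * (s ^ DIM('a) * measure lborel (ball (0::'a) 1)) = (s/8) ^ DIM('a) * measure lborel (ball (0::'a) 1)"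
          unfolding \<kappa>_def by (simp add: power_divide)
        then have "\<kappa> \<le> measure lebesgue ?F / measure lebesgue (ball xb s)"
        proof -
          have Bp: "measure lebesgue (ball xb s) > 0" using mb s U0 by simp
          have "\<kappa> * measure lebesgue (ball xb s) \<le> measure lebesgue ?F"
            unfolding mb using \<open>\<kappa> * _ = _\<close> le by linarith
          then show ?thesis using Bp by (simp add: pos_le_divide_eq)
        qed
        then show "ereal \<kappa> \<le> ereal (measure lebesgue ?F / measure lebesgue (ball xb s))" by simp
      qed
      have "ereal \<kappa> \<le> Liminf (at_right (0::real))
          (\<lambda>s. ereal (measure lebesgue (F_set c s (\<delta>/4) xb y z) / measure lebesgue (ball xb s)))"
        by (rule Liminf_bounded[OF ev])
      then show "Liminf (at_right (0::real))
          (\<lambda>s. ereal (measure lebesgue (F_set c s (\<delta>/4) xb y z) / measure lebesgue (ball xb s))) > 0"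
        using \<kappa>0 by (meson ereal_less(2) less_le_trans)
    qed
  qed
qed

end
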